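(* For every $k\in[K]$, \textsc{Min-Quant}$(k)$~$1|prec|\max w_jT_j$ (minimizing over $\pi\in\Pi$ the $k$th largest value among $f(\pi,S_1),\dots,f(\pi,S_K)$) is solvable in $O\!\left(\binom{K}{k-1}(K-k+1)n^2\right)$ time; in particular it is polynomially solvable when $k$ is a constant.
   Context: Single machine scheduling under scenarios. A set of jobs $J=\{1,\dots,n\}$ must be processed nonpreemptively on one machine, all jobs being available at time $0$; jobs may be subject to precedence constraints given by a partial order ($i\rightarrow j$ means job $j$ cannot start before job $i$ is completed). A schedule is a permutation $\pi$ of $J$ respecting the precedence constraints; $\Pi$ denotes the set of all schedules. A scenario set $\Gamma=\{S_1,\dots,S_K\}$, $K>1$, is given (part of the input); under scenario $S_i$ job $j$ has a nonnegative processing time $p_j(S_i)$, nonnegative due date $d_j(S_i)$ and nonnegative weight $w_j(S_i)$. $C_j(\pi,S_i)$ is the completion time of $j$ in $\pi$ under $S_i$, i.e. the sum of $p_k(S_i)$ over $k=j$ and all jobs $k$ preceding $j$ in $\pi$. The cost of $\pi$ under $S_i$ is $f(\pi,S_i)=\max_{j\in J} w_j(S_i)[C_j(\pi,S_i)-d_j(S_i)]^+$, where $[x]^+=\max\{0,x\}$. *)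

theory Defs
  imports Complex_Main "HOL-Library.Time_Functions"
begin

text \<open>Jobs are 0,...,n-1 and scenarios are 0,...,K-1.  Data of an instance:
  p s j, d s j, w s j : processing time, due date, weight of job j under scenario s;
  prec i j : precedence constraint i -> j (job j cannot start before job i is completed).\<close>

definition valid_instance ::
  "nat \<Rightarrow> nat \<Rightarrow> (nat \<Rightarrow> nat \<Rightarrow> real) \<Rightarrow> (nat \<Rightarrow> nat \<Rightarrow> real) \<Rightarrow> (nat \<Rightarrow> nat \<Rightarrow> real)
   \<Rightarrow> (nat \<Rightarrow> nat \<Rightarrow> bool) \<Rightarrow> bool" where
  "valid_instance n K p d w prec \<longleftrightarrow>
     1 \<le> n \<and> 1 < K \<and>
     (\<forall>s<K. \<forall>j<n. 0 \<le> p s j \<and> 0 \<le> d s j \<and> 0 \<le> w s j) \<and>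
     (\<forall>i<n. \<not> prec i i) \<and>
     (\<forall>i<n. \<forall>j<n. \<forall>l<n. prec i j \<and> prec j l \<longrightarrow> prec i l)"

definition schedules :: "nat \<Rightarrow> (nat \<Rightarrow> nat \<Rightarrow> bool) \<Rightarrow> nat list set" where
  "schedules n prec = {\<pi>. distinct \<pi> \<and> set \<pi> = {0..<n} \<and>
      (\<forall>a b. a < b \<and> b < length \<pi> \<longrightarrow> \<not> prec (\<pi> ! b) (\<pi> ! a))}"

definition completion :: "(nat \<Rightarrow> nat \<Rightarrow> real) \<Rightarrow> nat list \<Rightarrow> nat \<Rightarrow> nat \<Rightarrow> real" where
  "completion p \<pi> s j = sum_list (map (p s) (takeWhile (\<lambda>i. i \<noteq> j) \<pi> @ [j]))"

definition sched_cost ::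
  "nat \<Rightarrow> (nat \<Rightarrow> nat \<Rightarrow> real) \<Rightarrow> (nat \<Rightarrow> nat \<Rightarrow> real) \<Rightarrow> (nat \<Rightarrow> nat \<Rightarrow> real)
   \<Rightarrow> nat list \<Rightarrow> nat \<Rightarrow> real" where
  "sched_cost n p d w \<pi> s = Max ((\<lambda>j. w s j * max 0 (completion p \<pi> s j - d s j)) ` {0..<n})"

text \<open>k-th largest element of a list (1 \<le> k \<le> length xs).\<close>
definition kth_largest :: "nat \<Rightarrow> real list \<Rightarrow> real" where
  "kth_largest k xs = rev (sort xs) ! (k - 1)"

definition quant_obj ::
  "nat \<Rightarrow> nat \<Rightarrow> nat \<Rightarrow> (nat \<Rightarrow> nat \<Rightarrow> real) \<Rightarrow> (nat \<Rightarrow> nat \<Rightarrow> real) \<Rightarrow> (nat \<Rightarrow> nat \<Rightarrow> real)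
   \<Rightarrow> nat list \<Rightarrow> real" where
  "quant_obj n K k p d w \<pi> = kth_largest k (map (sched_cost n p d w \<pi>) [0..<K])"

definition minquant_optimal ::
  "nat \<Rightarrow> nat \<Rightarrow> nat \<Rightarrow> (nat \<Rightarrow> nat \<Rightarrow> real) \<Rightarrow> (nat \<Rightarrow> nat \<Rightarrow> real) \<Rightarrow> (nat \<Rightarrow> nat \<Rightarrow> real)
   \<Rightarrow> (nat \<Rightarrow> nat \<Rightarrow> bool) \<Rightarrow> nat list \<Rightarrow> bool" where
  "minquant_optimal n K k p d w prec \<pi> \<longleftrightarrow>
     \<pi> \<in> schedules n prec \<and>
     (\<forall>\<pi>' \<in> schedules n prec. quant_obj n K k p d w \<pi> \<le> quant_obj n K k p d w \<pi>')"

text \<open>All subsets of size m of the list xs (l = length xs), as lists.\<close>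
fun consall :: "nat \<Rightarrow> nat list list \<Rightarrow> nat list list" where
  "consall x [] = []"
| "consall x (ys # yss) = (x # ys) # consall x yss"

fun combs :: "nat \<Rightarrow> nat \<Rightarrow> nat list \<Rightarrow> nat list list" where
  "combs 0 l xs = [[]]"
| "combs (Suc m) l [] = []"
| "combs (Suc m) l (x # xs) =
     (if l < Suc m then [] else consall x (combs m (l - 1) xs) @ combs (Suc m) (l - 1) xs)"

fun rng :: "nat \<Rightarrow> nat list" where
  "rng 0 = []"
| "rng (Suc i) = i # rng i"

text \<open>Remaining jobs are kept as pairs (job, number of its successors among remaining jobs).\<close>
fun cnt :: "(nat \<Rightarrow> nat \<Rightarrow> bool) \<Rightarrow> nat \<Rightarrow> nat \<Rightarrow> nat" where
  "cnt pr j 0 = 0"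
| "cnt pr j (Suc i) = (if pr j i then Suc (cnt pr j i) else cnt pr j i)"

fun mkU :: "(nat \<Rightarrow> nat \<Rightarrow> bool) \<Rightarrow> nat \<Rightarrow> nat \<Rightarrow> (nat \<times> nat) list" where
  "mkU pr n 0 = []"
| "mkU pr n (Suc i) = (i, cnt pr i n) # mkU pr n i"

fun sumP :: "(nat \<Rightarrow> nat \<Rightarrow> real) \<Rightarrow> nat \<Rightarrow> (nat \<times> nat) list \<Rightarrow> real" where
  "sumP p s [] = 0"
| "sumP p s ((j, c) # U) = p s j + sumP p s U"

fun psums :: "(nat \<Rightarrow> nat \<Rightarrow> real) \<Rightarrow> nat list \<Rightarrow> (nat \<times> nat) list \<Rightarrow> (nat \<times> real) list" where
  "psums p [] U = []"
| "psums p (s # R) U = (s, sumP p s U) # psums p R U"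

fun gval :: "(nat \<Rightarrow> nat \<Rightarrow> real) \<Rightarrow> (nat \<Rightarrow> nat \<Rightarrow> real) \<Rightarrow> nat \<Rightarrow> (nat \<times> real) list \<Rightarrow> real" where
  "gval w d j [] = 0"
| "gval w d j ((s, P) # PS) = max (w s j * max 0 (P - d s j)) (gval w d j PS)"

fun bestj :: "(nat \<Rightarrow> nat \<Rightarrow> real) \<Rightarrow> (nat \<Rightarrow> nat \<Rightarrow> real) \<Rightarrow> (nat \<times> real) list
    \<Rightarrow> (nat \<times> nat) list \<Rightarrow> (nat \<times> real) option" where
  "bestj w d PS [] = None"
| "bestj w d PS ((j, c) # U) =
     (let r = bestj w d PS U in
      if c = 0 then
        (let g = gval w d j PS in
         case r of None \<Rightarrow> Some (j, g)
         | Some (j', g') \<Rightarrow> if g \<le> g' then Some (j, g) else Some (j', g'))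
      else r)"

fun pick :: "(nat \<Rightarrow> nat \<Rightarrow> bool) \<Rightarrow> nat \<Rightarrow> (nat \<times> nat) list \<Rightarrow> (nat \<times> nat) list" where
  "pick pr j [] = []"
| "pick pr j ((i, c) # U) =
     (if i = j then pick pr j U
      else if pr i j then (i, c - 1) # pick pr j U else (i, c) # pick pr j U)"

text \<open>Lawler-type backward construction for min-max over the scenario list R.\<close>
fun lawler :: "(nat \<Rightarrow> nat \<Rightarrow> real) \<Rightarrow> (nat \<Rightarrow> nat \<Rightarrow> real) \<Rightarrow> (nat \<Rightarrow> nat \<Rightarrow> real)
    \<Rightarrow> (nat \<Rightarrow> nat \<Rightarrow> bool) \<Rightarrow> nat list \<Rightarrow> nat \<Rightarrow> (nat \<times> nat) list \<Rightarrow> nat list \<Rightarrow> nat list" where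
  "lawler p d w pr R 0 U acc = acc"
| "lawler p d w pr R (Suc f) U acc =
     (if U = [] then acc
      else (case bestj w d (psums p R U) U of
              None \<Rightarrow> acc
            | Some (j, g) \<Rightarrow> lawler p d w pr R f (pick pr j U) (j # acc)))"

fun fval :: "(nat \<Rightarrow> nat \<Rightarrow> real) \<Rightarrow> (nat \<Rightarrow> nat \<Rightarrow> real) \<Rightarrow> (nat \<Rightarrow> nat \<Rightarrow> real)
    \<Rightarrow> nat \<Rightarrow> nat list \<Rightarrow> real \<Rightarrow> real" where
  "fval p d w s [] t = 0"
| "fval p d w s (j # \<sigma>) t =
     (let c = t + p s j in max (w s j * max 0 (c - d s j)) (fval p d w s \<sigma> c))"

fun vmax :: "(nat \<Rightarrow> nat \<Rightarrow> real) \<Rightarrow> (nat \<Rightarrow> nat \<Rightarrow> real) \<Rightarrow> (nat \<Rightarrow> nat \<Rightarrow> real)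
    \<Rightarrow> nat list \<Rightarrow> nat list \<Rightarrow> real" where
  "vmax p d w [] \<sigma> = 0"
| "vmax p d w (s # R) \<sigma> = max (fval p d w s \<sigma> 0) (vmax p d w R \<sigma>)"

definition solve1 :: "(nat \<Rightarrow> nat \<Rightarrow> real) \<Rightarrow> (nat \<Rightarrow> nat \<Rightarrow> real) \<Rightarrow> (nat \<Rightarrow> nat \<Rightarrow> real)
    \<Rightarrow> (nat \<Rightarrow> nat \<Rightarrow> bool) \<Rightarrow> nat \<Rightarrow> nat list \<Rightarrow> nat list \<times> real" where
  "solve1 p d w pr n R =
     (let \<sigma> = lawler p d w pr R n (mkU pr n n) [] in (\<sigma>, vmax p d w R \<sigma>))"

fun minsol :: "(nat \<Rightarrow> nat \<Rightarrow> real) \<Rightarrow> (nat \<Rightarrow> nat \<Rightarrow> real) \<Rightarrow> (nat \<Rightarrow> nat \<Rightarrow> real)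
    \<Rightarrow> (nat \<Rightarrow> nat \<Rightarrow> bool) \<Rightarrow> nat \<Rightarrow> nat list list \<Rightarrow> (nat list \<times> real) option" where
  "minsol p d w pr n [] = None"
| "minsol p d w pr n (R # Rs) =
     (let a = solve1 p d w pr n R in
      case minsol p d w pr n Rs of
        None \<Rightarrow> Some a
      | Some b \<Rightarrow> if snd a \<le> snd b then Some a else Some b)"

text \<open>Min-Quant(k): try every set of K-k+1 scenarios kept (equivalently every set of k-1
  scenarios discarded), solve min-max over the kept ones, return the best schedule.\<close>
definition minquant :: "(nat \<Rightarrow> nat \<Rightarrow> real) \<Rightarrow> (nat \<Rightarrow> nat \<Rightarrow> real) \<Rightarrow> (nat \<Rightarrow> nat \<Rightarrow> real)
    \<Rightarrow> (nat \<Rightarrow> nat \<Rightarrow> bool) \<Rightarrow> nat \<Rightarrow> nat \<Rightarrow> nat \<Rightarrow> nat list" where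
  "minquant p d w pr n K k =
     (case minsol p d w pr n (combs (K - k + 1) K (rng K)) of
        None \<Rightarrow> []
      | Some (\<sigma>, v) \<Rightarrow> \<sigma>)"

text \<open>Step-counting running-time functions, written out by hand exactly as the
  HOL-Library time framework (command time_fun, see HOL-Library.Time_Manual) generates
  them for the functions above: every call of a user-defined function costs 1 plus the
  cost of evaluating its body; constructors and arithmetic/comparison primitives cost 0.
  For a function-valued input parameter f the framework passes a time function T_f
  (or the pair (f, T_f)); accessing an input datum therefore costs T_f of its arguments.\<close>

fun T_consall :: "nat \<Rightarrow> nat list list \<Rightarrow> nat" where
  "T_consall x [] = 1"
| "T_consall x (ys # yss) = T_consall x yss + 1"

fun T_combs :: "nat \<Rightarrow> nat \<Rightarrow> nat list \<Rightarrow> nat" where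
  "T_combs 0 l xs = 1"
| "T_combs (Suc m) l [] = 1"
| "T_combs (Suc m) l (x # xs) =
    (if l < Suc m then 0
     else T_combs m (l - 1) xs + T_consall x (combs m (l - 1) xs) +
          (T_combs (Suc m) (l - 1) xs +
           T_append (consall x (combs m (l - 1) xs)) (combs (Suc m) (l - 1) xs))) + 1"

fun T_rng :: "nat \<Rightarrow> nat" where
  "T_rng 0 = 1"
| "T_rng (Suc i) = T_rng i + 1"

fun T_cnt :: "(nat \<Rightarrow> nat \<Rightarrow> nat) \<Rightarrow> nat \<Rightarrow> nat \<Rightarrow> nat" where
  "T_cnt T_pr j 0 = 1"
| "T_cnt T_pr j (Suc i) = T_pr j i + T_cnt T_pr j i + 1"

fun T_mkU :: "(nat \<Rightarrow> nat \<Rightarrow> nat) \<Rightarrow> nat \<Rightarrow> nat \<Rightarrow> nat" where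
  "T_mkU T_pr n 0 = 1"
| "T_mkU T_pr n (Suc i) = T_cnt T_pr i n + T_mkU T_pr n i + 1"

fun T_sumP :: "(nat \<Rightarrow> nat \<Rightarrow> nat) \<Rightarrow> nat \<Rightarrow> (nat \<times> nat) list \<Rightarrow> nat" where
  "T_sumP T_p s [] = 1"
| "T_sumP T_p s ((j, c) # U) = T_p s j + T_sumP T_p s U + 1"

fun T_psums :: "(nat \<Rightarrow> nat \<Rightarrow> nat) \<Rightarrow> nat list \<Rightarrow> (nat \<times> nat) list \<Rightarrow> nat" where
  "T_psums T_p [] U = 1"
| "T_psums T_p (s # R) U = T_sumP T_p s U + T_psums T_p R U + 1"

fun T_gval :: "(nat \<Rightarrow> nat \<Rightarrow> nat) \<Rightarrow> (nat \<Rightarrow> nat \<Rightarrow> nat) \<Rightarrow> nat \<Rightarrow> (nat \<times> real) list \<Rightarrow> nat" where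
  "T_gval T_w T_d j [] = 1"
| "T_gval T_w T_d j ((s, P) # PS) = T_w s j + T_d s j + T_gval T_w T_d j PS + 1"

fun T_bestj :: "(nat \<Rightarrow> nat \<Rightarrow> nat) \<Rightarrow> (nat \<Rightarrow> nat \<Rightarrow> nat) \<Rightarrow> (nat \<times> real) list
    \<Rightarrow> (nat \<times> nat) list \<Rightarrow> nat" where
  "T_bestj T_w T_d PS [] = 1"
| "T_bestj T_w T_d PS ((j, c) # U) =
    T_bestj T_w T_d PS U + (if c = 0 then T_gval T_w T_d j PS else 0) + 1"

fun T_pick :: "(nat \<Rightarrow> nat \<Rightarrow> nat) \<Rightarrow> nat \<Rightarrow> (nat \<times> nat) list \<Rightarrow> nat" where
  "T_pick T_pr j [] = 1"
| "T_pick T_pr j ((i, c) # U) =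
    (if i = j then T_pick T_pr j U else T_pr i j + T_pick T_pr j U) + 1"

fun T_lawler :: "(nat \<Rightarrow> nat \<Rightarrow> real) \<times> (nat \<Rightarrow> nat \<Rightarrow> nat)
    \<Rightarrow> (nat \<Rightarrow> nat \<Rightarrow> real) \<times> (nat \<Rightarrow> nat \<Rightarrow> nat)
    \<Rightarrow> (nat \<Rightarrow> nat \<Rightarrow> real) \<times> (nat \<Rightarrow> nat \<Rightarrow> nat)
    \<Rightarrow> (nat \<Rightarrow> nat \<Rightarrow> bool) \<times> (nat \<Rightarrow> nat \<Rightarrow> nat)
    \<Rightarrow> nat list \<Rightarrow> nat \<Rightarrow> (nat \<times> nat) list \<Rightarrow> nat list \<Rightarrow> nat" where
  "T_lawler p d w pr R 0 U acc = 1"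
| "T_lawler p d w pr R (Suc f) U acc =
    (if U = [] then 0
     else T_psums (snd p) R U +
          T_bestj (snd w) (snd d) (psums (fst p) R U) U +
          (case bestj (fst w) (fst d) (psums (fst p) R U) U of
             None \<Rightarrow> 0
           | Some (j, g) \<Rightarrow>
               T_pick (snd pr) j U + T_lawler p d w pr R f (pick (fst pr) j U) (j # acc))) + 1"

fun T_fval :: "(nat \<Rightarrow> nat \<Rightarrow> real) \<times> (nat \<Rightarrow> nat \<Rightarrow> nat)
    \<Rightarrow> (nat \<Rightarrow> nat \<Rightarrow> real) \<times> (nat \<Rightarrow> nat \<Rightarrow> nat)
    \<Rightarrow> (nat \<Rightarrow> nat \<Rightarrow> real) \<times> (nat \<Rightarrow> nat \<Rightarrow> nat)
    \<Rightarrow> nat \<Rightarrow> nat list \<Rightarrow> real \<Rightarrow> nat" where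
  "T_fval p d w s [] t = 1"
| "T_fval p d w s (j # \<sigma>) t =
    snd p s j + (let c = t + fst p s j in snd w s j + snd d s j + T_fval p d w s \<sigma> c) + 1"

fun T_vmax :: "(nat \<Rightarrow> nat \<Rightarrow> real) \<times> (nat \<Rightarrow> nat \<Rightarrow> nat)
    \<Rightarrow> (nat \<Rightarrow> nat \<Rightarrow> real) \<times> (nat \<Rightarrow> nat \<Rightarrow> nat)
    \<Rightarrow> (nat \<Rightarrow> nat \<Rightarrow> real) \<times> (nat \<Rightarrow> nat \<Rightarrow> nat)
    \<Rightarrow> nat list \<Rightarrow> nat list \<Rightarrow> nat" where
  "T_vmax p d w [] \<sigma> = 1"
| "T_vmax p d w (s # R) \<sigma> = T_fval p d w s \<sigma> 0 + T_vmax p d w R \<sigma> + 1"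

definition T_solve1 :: "(nat \<Rightarrow> nat \<Rightarrow> real) \<times> (nat \<Rightarrow> nat \<Rightarrow> nat)
    \<Rightarrow> (nat \<Rightarrow> nat \<Rightarrow> real) \<times> (nat \<Rightarrow> nat \<Rightarrow> nat)
    \<Rightarrow> (nat \<Rightarrow> nat \<Rightarrow> real) \<times> (nat \<Rightarrow> nat \<Rightarrow> nat)
    \<Rightarrow> (nat \<Rightarrow> nat \<Rightarrow> bool) \<times> (nat \<Rightarrow> nat \<Rightarrow> nat)
    \<Rightarrow> nat \<Rightarrow> nat list \<Rightarrow> nat" where
  "T_solve1 p d w pr n R =
    T_mkU (snd pr) n n + T_lawler p d w pr R n (mkU (fst pr) n n) [] +
    Let (lawler (fst p) (fst d) (fst w) (fst pr) R n (mkU (fst pr) n n) []) (T_vmax p d w R)"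

fun T_minsol :: "(nat \<Rightarrow> nat \<Rightarrow> real) \<times> (nat \<Rightarrow> nat \<Rightarrow> nat)
    \<Rightarrow> (nat \<Rightarrow> nat \<Rightarrow> real) \<times> (nat \<Rightarrow> nat \<Rightarrow> nat)
    \<Rightarrow> (nat \<Rightarrow> nat \<Rightarrow> real) \<times> (nat \<Rightarrow> nat \<Rightarrow> nat)
    \<Rightarrow> (nat \<Rightarrow> nat \<Rightarrow> bool) \<times> (nat \<Rightarrow> nat \<Rightarrow> nat)
    \<Rightarrow> nat \<Rightarrow> nat list list \<Rightarrow> nat" where
  "T_minsol p d w pr n [] = 1"
| "T_minsol p d w pr n (R # Rs) =
    T_solve1 p d w pr n R +
    (let a = solve1 (fst p) (fst d) (fst w) (fst pr) n R
     in T_minsol p d w pr n Rs +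
        (case minsol (fst p) (fst d) (fst w) (fst pr) n Rs of
           None \<Rightarrow> 0
         | Some b \<Rightarrow> T_snd a + T_snd b)) + 1"

definition T_minquant :: "(nat \<Rightarrow> nat \<Rightarrow> real) \<times> (nat \<Rightarrow> nat \<Rightarrow> nat)
    \<Rightarrow> (nat \<Rightarrow> nat \<Rightarrow> real) \<times> (nat \<Rightarrow> nat \<Rightarrow> nat)
    \<Rightarrow> (nat \<Rightarrow> nat \<Rightarrow> real) \<times> (nat \<Rightarrow> nat \<Rightarrow> nat)
    \<Rightarrow> (nat \<Rightarrow> nat \<Rightarrow> bool) \<times> (nat \<Rightarrow> nat \<Rightarrow> nat)
    \<Rightarrow> nat \<Rightarrow> nat \<Rightarrow> nat \<Rightarrow> nat" where
  "T_minquant p d w pr n K k =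
    T_rng K + T_combs (K - k + 1) K (rng K) +
    T_minsol p d w pr n (combs (K - k + 1) K (rng K))"

end

theory Submission
  imports Defs
begin

lemma consall_map: "consall x L = map ((#) x) L"
  by (induction L) auto

lemma T_consall_eq: "T_consall x L = length L + 1"
  by (induction L) auto

lemma length_combs: "length xs = l \<Longrightarrow> length (combs m l xs) = l choose m"
proof (induction xs arbitrary: m l)
  case Nil then show ?case by (cases m) auto
next
  case (Cons x xs)
  show ?case
  proof (cases m)
    case 0 then show ?thesis by simp
  next
    case (Suc m')
    then show ?thesis using Cons
      by (auto simp: consall_map binomial_eq_0)
  qed
qed

lemma T_combs_bound:
  "length xs = l \<Longrightarrow> T_combs m l xs \<le> 6 * (m + 1) * (l choose m) + (if l < m then 1 else 0)"
proof (induction xs arbitrary: m l)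
  case Nil then show ?case by (cases m) auto
next
  case (Cons x xs)
  show ?case
  proof (cases m)
    case 0 then show ?thesis by simp
  next
    case (Suc m')
    show ?thesis
    proof (cases "l < Suc m'")
      case True then show ?thesis using Suc Cons.prems by simp
    next
      case False
      define L where "L = length xs"
      have l: "l = Suc L" using Cons.prems L_def by simp
      have mL: "m' \<le> L" using False l by simp
      have C1: "1 \<le> L choose m'" using mL by (simp add: Suc_leI)
      have IH1: "T_combs m' L xs \<le> 6 * (m' + 1) * (L choose m')"
        using Cons.IH[of L m'] mL L_def by simp
      have IH2: "T_combs (Suc m') L xs \<le> 6 * (Suc m' + 1) * (L choose Suc m') + 1"
        using Cons.IH[of L "Suc m'"] L_def by (simp split: if_splits)
      have "T_combs m l (x # xs) = T_combs m' L xs + ((L choose m') + 1) +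
            (T_combs (Suc m') L xs + ((L choose m') + 1)) + 1"
        using Suc l False by (simp add: T_consall_eq T_append length_combs L_def consall_map)
      also have "\<dots> \<le> 6 * (m' + 1) * (L choose m') + ((L choose m') + 1) +
            (6 * (Suc m' + 1) * (L choose Suc m') + 1 + ((L choose m') + 1)) + 1"
        using IH1 IH2 by linarith
      also have "\<dots> \<le> 6 * (Suc m' + 1) * ((L choose m') + (L choose Suc m'))"
      proof -
        have e: "6 * (Suc m' + 1) * ((L choose m') + (L choose Suc m')) =
          6 * (m' + 1) * (L choose m') + 6 * (L choose m') + 6 * (Suc m' + 1) * (L choose Suc m')"
          by (simp add: algebra_simps)
        show ?thesis unfolding e using C1 by linarith
      qed
      also have "\<dots> = 6 * (m + 1) * (l choose m)" using Suc l by simp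
      finally show ?thesis by simp
    qed
  qed
qed

lemma T_cnt_eq: "(\<And>a b. T a b = 1) \<Longrightarrow> T_cnt T j m = 2 * m + 1"
  by (induction m) auto

lemma T_mkU_eq: "(\<And>a b. T a b = 1) \<Longrightarrow> T_mkU T n i = i * (2 * n + 2) + 1"
  by (induction i) (simp_all add: T_cnt_eq)

lemma T_sumP_eq: "(\<And>a b. T a b = 1) \<Longrightarrow> T_sumP T s U = 2 * length U + 1"
  by (induction T s U rule: T_sumP.induct) auto

lemma T_psums_eq: "(\<And>a b. T a b = 1) \<Longrightarrow> T_psums T R U = length R * (2 * length U + 2) + 1"
  by (induction R) (simp_all add: T_sumP_eq)

lemma length_psums: "length (psums p R U) = length R"
  by (induction R) auto

lemma T_gval_eq: "(\<And>a b. T a b = 1) \<Longrightarrow> (\<And>a b. T' a b = 1) \<Longrightarrow> T_gval T T' j PS = 3 * length PS + 1"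
  by (induction T T' j PS rule: T_gval.induct) auto

lemma T_bestj_le: "(\<And>a b. T a b = 1) \<Longrightarrow> (\<And>a b. T' a b = 1) \<Longrightarrow> T_bestj T T' PS U \<le> length U * (3 * length PS + 2) + 1"
  by (induction T T' PS U rule: T_bestj.induct) (auto simp: T_gval_eq)

lemma T_pick_le: "(\<And>a b. T a b = 1) \<Longrightarrow> T_pick T j U \<le> 2 * length U + 1"
  by (induction T j U rule: T_pick.induct) auto

lemma length_pick: "length (pick q j U) \<le> length U"
  by (induction q j U rule: pick.induct) auto

lemma T_snd_eq: "T_snd x = 0"
  by (cases x) simp

lemma T_lawler_le:
  assumes T1: "\<And>a b. Tp a b = 1" "\<And>a b. Td a b = 1" "\<And>a b. Tw a b = 1" "\<And>a b. Tq a b = 1"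
  shows "length U \<le> L \<Longrightarrow>
   T_lawler (p, Tp) (d, Td) (w, Tw) (pr, Tq) R f U acc
     \<le> f * (9 * (length R + 1) * (L + 1)) + 1"
proof (induction f arbitrary: U acc)
  case 0 then show ?case by simp
next
  case (Suc f)
  show ?case
  proof (cases "U = []")
    case True then show ?thesis by simp
  next
    case False
    let ?PS = "psums p R U"
    have a: "T_psums Tp R U \<le> length R * (2 * L + 2) + 1"
      using Suc.prems by (simp add: T_psums_eq T1)
    have b: "T_bestj Tw Td ?PS U \<le> L * (3 * length R + 2) + 1"
    proof -
      have "T_bestj Tw Td ?PS U \<le> length U * (3 * length R + 2) + 1"
        using T_bestj_le[of Tw Td ?PS U] T1 by (simp add: length_psums)
      also have "\<dots> \<le> L * (3 * length R + 2) + 1"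
        using mult_le_mono1[OF Suc.prems, of "3 * length R + 2"] by simp
      finally show ?thesis .
    qed
    have c: "(case bestj w d ?PS U of None \<Rightarrow> 0
           | Some (j, g) \<Rightarrow> T_pick (snd (pr, Tq)) j U +
              T_lawler (p, Tp) (d, Td) (w, Tw) (pr, Tq) R f (pick (fst (pr, Tq)) j U) (j # acc))
        \<le> 2 * L + 1 + (f * (9 * (length R + 1) * (L + 1)) + 1)"
    proof (cases "bestj w d ?PS U")
      case None then show ?thesis by simp
    next
      case (Some a)
      obtain j g where a: "a = (j, g)" by (cases a)
      have "T_pick Tq j U \<le> 2 * L + 1"
        using T_pick_le[of Tq j U] Suc.prems T1 by simp
      moreover have "length (pick pr j U) \<le> L"
        using length_pick[of pr j U] Suc.prems by simp
      ultimately show ?thesis using Some a Suc.IH[of "pick pr j U" "j # acc"] by simp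
    qed
    have "T_lawler (p, Tp) (d, Td) (w, Tw) (pr, Tq) R (Suc f) U acc
       \<le> (length R * (2 * L + 2) + 1) + (L * (3 * length R + 2) + 1) +
          (2 * L + 1 + (f * (9 * (length R + 1) * (L + 1)) + 1)) + 1"
    proof -
      have eq: "T_lawler (p, Tp) (d, Td) (w, Tw) (pr, Tq) R (Suc f) U acc =
        T_psums Tp R U + T_bestj Tw Td ?PS U + (case bestj w d ?PS U of None \<Rightarrow> 0
           | Some (j, g) \<Rightarrow> T_pick (snd (pr, Tq)) j U +
              T_lawler (p, Tp) (d, Td) (w, Tw) (pr, Tq) R f (pick (fst (pr, Tq)) j U) (j # acc)) + 1"
        using False by simp
      show ?thesis unfolding eq using a b c by linarith
    qed
    also have "\<dots> \<le> Suc f * (9 * (length R + 1) * (L + 1)) + 1"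
      by (simp add: algebra_simps)
    finally show ?thesis .
  qed
qed

lemma length_lawler: "length (lawler p d w pr R f U acc) \<le> f + length acc"
proof (induction f arbitrary: U acc)
  case 0 then show ?case by simp
next
  case (Suc f)
  show ?case
  proof (cases "U = []")
    case True then show ?thesis by simp
  next
    case False
    show ?thesis
    proof (cases "bestj w d (psums p R U) U")
      case None then show ?thesis using False by simp
    next
      case (Some a)
      obtain j g where a: "a = (j, g)" by (cases a)
      have "length (lawler p d w pr R f (pick pr j U) (j # acc)) \<le> f + length (j # acc)"
        by (rule Suc.IH)
      then show ?thesis using False Some a by simp
    qed
  qed
qed

lemma T_fval_eq: "(\<And>a b. Tp a b = 1) \<Longrightarrow> (\<And>a b. Td a b = 1) \<Longrightarrow> (\<And>a b. Tw a b = 1) \<Longrightarrow>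
  T_fval (p, Tp) (d, Td) (w, Tw) s \<sigma> t = 4 * length \<sigma> + 1"
  by (induction \<sigma> arbitrary: t) (auto simp: Let_def)

lemma T_vmax_eq: "(\<And>a b. Tp a b = 1) \<Longrightarrow> (\<And>a b. Td a b = 1) \<Longrightarrow> (\<And>a b. Tw a b = 1) \<Longrightarrow>
  T_vmax (p, Tp) (d, Td) (w, Tw) R \<sigma> = length R * (4 * length \<sigma> + 2) + 1"
  by (induction R) (auto simp: T_fval_eq)

lemma length_mkU: "length (mkU pr n i) = i"
  by (induction i) auto

lemma T_solve1_le:
  assumes T1: "\<And>a b. Tp a b = 1" "\<And>a b. Td a b = 1" "\<And>a b. Tw a b = 1" "\<And>a b. Tq a b = 1"
  assumes "1 \<le> n" "1 \<le> length R"
  shows "T_solve1 (p, Tp) (d, Td) (w, Tw) (pr, Tq) n R \<le> 60 * (length R * n^2)"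
proof -
  let ?m = "length R"
  have l: "length (lawler p d w pr R n (mkU pr n n) []) \<le> n"
    using length_lawler[of p d w pr R n "mkU pr n n" "[]"] by simp
  have nn: "n \<le> n * n" "1 \<le> n * n" using assms by simp_all
  have A: "T_mkU Tq n n \<le> 5 * n^2"
  proof -
    have "T_mkU Tq n n = 2 * (n * n) + 2 * n + 1" using T1 by (simp add: T_mkU_eq algebra_simps)
    also have "\<dots> \<le> 5 * (n * n)" using nn by linarith
    finally show ?thesis by (simp add: power2_eq_square)
  qed
  have B: "T_lawler (p, Tp) (d, Td) (w, Tw) (pr, Tq) R n (mkU pr n n) []
      \<le> n * (9 * (?m + 1) * (n + 1)) + 1"
    using T_lawler_le[of Tp Td Tw Tq "mkU pr n n" n] T1 by (simp add: length_mkU)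
  have C: "T_vmax (p, Tp) (d, Td) (w, Tw) R (lawler p d w pr R n (mkU pr n n) [])
      \<le> ?m * (4 * n + 2) + 1"
    using l T1 by (simp add: T_vmax_eq)
  have m1: "?m + 1 \<le> 2 * ?m" and n1: "n + 1 \<le> 2 * n" using assms by auto
  have "n * (9 * (?m + 1) * (n + 1)) \<le> n * (9 * (2 * ?m) * (2 * n))"
    using m1 n1 by (intro mult_le_mono mult_le_mono2 order.refl) auto
  also have "\<dots> = 36 * (?m * n^2)" by (simp add: power2_eq_square algebra_simps)
  finally have B': "n * (9 * (?m + 1) * (n + 1)) \<le> 36 * (?m * n^2)" .
  have "?m * (4 * n + 2) \<le> ?m * (6 * n)" using assms by simp
  also have "\<dots> \<le> ?m * (6 * n * n)" using assms by simp
  finally have C': "?m * (4 * n + 2) \<le> 6 * (?m * n^2)" by (simp add: power2_eq_square algebra_simps)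
  have one: "1 \<le> ?m * n^2" using assms by simp
  have n2: "n^2 \<le> ?m * n^2" using assms by simp
  have "T_solve1 (p, Tp) (d, Td) (w, Tw) (pr, Tq) n R
     \<le> 5 * n^2 + (n * (9 * (?m + 1) * (n + 1)) + 1) + (?m * (4 * n + 2) + 1)"
    using A B C by (simp add: T_solve1_def Let_def)
  also have "\<dots> \<le> 60 * (?m * n^2)"
    using B' C' one n2 by linarith
  finally show ?thesis .
qed

lemma T_minsol_le:
  assumes T1: "\<And>a b. Tp a b = 1" "\<And>a b. Td a b = 1" "\<And>a b. Tw a b = 1" "\<And>a b. Tq a b = 1"
  assumes "1 \<le> n" "1 \<le> m" "\<forall>R\<in>set Rs. length R = m"
  shows "T_minsol (p, Tp) (d, Td) (w, Tw) (pr, Tq) n Rs \<le> length Rs * (61 * (m * n^2)) + 1"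
  using assms(7)
proof (induction Rs)
  case Nil then show ?case by simp
next
  case (Cons R Rs)
  have a: "T_solve1 (p, Tp) (d, Td) (w, Tw) (pr, Tq) n R \<le> 60 * (m * n^2)"
    using T_solve1_le[of Tp Td Tw Tq n R] assms Cons.prems by simp
  have b: "T_minsol (p, Tp) (d, Td) (w, Tw) (pr, Tq) n Rs \<le> length Rs * (61 * (m * n^2)) + 1"
    using Cons by simp
  have one: "1 \<le> m * n^2" using assms by simp
  have "T_minsol (p, Tp) (d, Td) (w, Tw) (pr, Tq) n (R # Rs) =
     T_solve1 (p, Tp) (d, Td) (w, Tw) (pr, Tq) n R + T_minsol (p, Tp) (d, Td) (w, Tw) (pr, Tq) n Rs + 1"
    by (simp add: Let_def T_snd_eq split: option.splits)
  also have "\<dots> \<le> length (R # Rs) * (61 * (m * n^2)) + 1"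
  proof -
    have "length (R # Rs) * (61 * (m * n^2)) = length Rs * (61 * (m * n^2)) + 61 * (m * n^2)" by simp
    then show ?thesis using a b one by linarith
  qed
  finally show ?case .
qed


lemma fval_nonneg: "0 \<le> fval p d w s \<sigma> t"
  by (induction \<sigma> arbitrary: t) (auto simp: Let_def max.coboundedI2)

lemma fval_append:
  "fval p d w s (xs @ ys) t = max (fval p d w s xs t) (fval p d w s ys (t + sum_list (map (p s) xs)))"
  by (induction xs arbitrary: t) (simp_all add: Let_def max.assoc add.assoc fval_nonneg max_absorb2)

lemma fval_mono_t:
  "(\<forall>x\<in>set \<sigma>. 0 \<le> w s x) \<Longrightarrow> t \<le> t' \<Longrightarrow> fval p d w s \<sigma> t \<le> fval p d w s \<sigma> t'"
proof (induction \<sigma> arbitrary: t t')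
  case Nil then show ?case by simp
next
  case (Cons x \<sigma>)
  have "w s x * max 0 (t + p s x - d s x) \<le> w s x * max 0 (t' + p s x - d s x)"
    using Cons.prems by (intro mult_left_mono) auto
  moreover have "fval p d w s \<sigma> (t + p s x) \<le> fval p d w s \<sigma> (t' + p s x)"
    using Cons by auto
  ultimately show ?case unfolding fval.simps Let_def by (rule max.mono)
qed

lemma fval_remove1:
  "(\<forall>x\<in>set \<sigma>. 0 \<le> w s x \<and> 0 \<le> p s x) \<Longrightarrow> fval p d w s (remove1 j \<sigma>) t \<le> fval p d w s \<sigma> t"
proof (induction \<sigma> arbitrary: t)
  case Nil then show ?case by simp
next
  case (Cons x \<sigma>)
  show ?case
  proof (cases "x = j")
    case True
    have "fval p d w s \<sigma> t \<le> fval p d w s \<sigma> (t + p s x)"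
      using Cons.prems by (intro fval_mono_t) auto
    then show ?thesis using True by (simp add: Let_def)
  next
    case False
    have "fval p d w s (remove1 j \<sigma>) (t + p s x) \<le> fval p d w s \<sigma> (t + p s x)"
      using Cons by auto
    then show ?thesis using False by (simp add: Let_def max.mono)
  qed
qed

lemma vmax_ge: "s \<in> set R \<Longrightarrow> fval p d w s \<sigma> 0 \<le> vmax p d w R \<sigma>"
  by (induction R) auto

lemma vmax_le: "0 \<le> M \<Longrightarrow> (\<forall>s\<in>set R. fval p d w s \<sigma> 0 \<le> M) \<Longrightarrow> vmax p d w R \<sigma> \<le> M"
  by (induction R) auto

lemma vmax_nonneg: "0 \<le> vmax p d w R \<sigma>"
  by (induction R) (auto simp: max.coboundedI2)

lemma fval_ge_h:
  "j \<in> set \<sigma> \<Longrightarrow>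
   w s j * max 0 (t + sum_list (map (p s) (takeWhile (\<lambda>i. i \<noteq> j) \<sigma> @ [j])) - d s j) \<le> fval p d w s \<sigma> t"
proof (induction \<sigma> arbitrary: t)
  case Nil then show ?case by simp
next
  case (Cons x \<sigma>)
  show ?case
  proof (cases "j = x")
    case True then show ?thesis by (simp add: Let_def)
  next
    case False
    then have "j \<in> set \<sigma>" using Cons.prems by simp
    from Cons.IH[OF this, of "t + p s x"] False show ?thesis
      by (simp add: Let_def add.assoc max.coboundedI2)
  qed
qed

lemma fval_le_M:
  "distinct \<sigma> \<Longrightarrow> 0 \<le> M \<Longrightarrow>
   (\<forall>j\<in>set \<sigma>. w s j * max 0 (t + sum_list (map (p s) (takeWhile (\<lambda>i. i \<noteq> j) \<sigma> @ [j])) - d s j) \<le> M)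
   \<Longrightarrow> fval p d w s \<sigma> t \<le> M"
proof (induction \<sigma> arbitrary: t)
  case Nil then show ?case by simp
next
  case (Cons x \<sigma>)
  have hx: "w s x * max 0 (t + p s x - d s x) \<le> M" using Cons.prems(3) by simp
  have "\<forall>j\<in>set \<sigma>. w s j * max 0 (t + p s x + sum_list (map (p s) (takeWhile (\<lambda>i. i \<noteq> j) \<sigma> @ [j])) - d s j) \<le> M"
  proof
    fix j assume j: "j \<in> set \<sigma>"
    then have jx: "j \<noteq> x" "x \<noteq> j" using Cons.prems(1) by auto
    have "w s j * max 0 (t + sum_list (map (p s) (takeWhile (\<lambda>i. i \<noteq> j) (x # \<sigma>) @ [j])) - d s j) \<le> M"
      using Cons.prems(3) j by simp
    then show "w s j * max 0 (t + p s x + sum_list (map (p s) (takeWhile (\<lambda>i. i \<noteq> j) \<sigma> @ [j])) - d s j) \<le> M"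
      using jx by (simp add: add.assoc)
  qed
  then have "fval p d w s \<sigma> (t + p s x) \<le> M" using Cons by simp
  then show ?case using hx by (simp add: Let_def)
qed

lemma sched_cost_eq:
  assumes "\<sigma> \<in> schedules n prec" "1 \<le> n" "\<forall>j<n. 0 \<le> w s j"
  shows "fval p d w s \<sigma> 0 = sched_cost n p d w \<sigma> s"
proof -
  let ?h = "\<lambda>j. w s j * max 0 (completion p \<sigma> s j - d s j)"
  let ?F = "?h ` {0..<n}"
  have fin: "finite ?F" and ne: "?F \<noteq> {}" using assms by auto
  have st: "set \<sigma> = {0..<n}" "distinct \<sigma>" using assms(1) by (auto simp: schedules_def)
  have A: "Max ?F \<le> fval p d w s \<sigma> 0"
  proof (subst Max_le_iff[OF fin ne], intro ballI)
    fix x assume "x \<in> ?F"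
    then obtain j where j: "j < n" "x = ?h j" by auto
    show "x \<le> fval p d w s \<sigma> 0"
      using fval_ge_h[of j \<sigma> w s 0 p d] j st by (simp add: completion_def)
  qed
  have h0: "0 \<le> ?h 0" using assms by simp
  have "?h 0 \<le> Max ?F" by (rule Max_ge[OF fin]) (use assms(2) in auto)
  then have M0: "0 \<le> Max ?F" using h0 by linarith
  have B: "fval p d w s \<sigma> 0 \<le> Max ?F"
  proof (rule fval_le_M[OF st(2) M0], intro ballI)
    fix j assume "j \<in> set \<sigma>"
    then have "?h j \<in> ?F" using st by auto
    then show "w s j * max 0 (0 + sum_list (map (p s) (takeWhile (\<lambda>i. i \<noteq> j) \<sigma> @ [j])) - d s j) \<le> Max ?F"
      using Max_ge[OF fin] by (simp add: completion_def)
  qed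
  show ?thesis using A B by (simp add: sched_cost_def)
qed

lemma combs_props:
  "length xs = l \<Longrightarrow> distinct xs \<Longrightarrow> ys \<in> set (combs m l xs) \<Longrightarrow>
   distinct ys \<and> set ys \<subseteq> set xs \<and> length ys = m"
proof (induction xs arbitrary: m l ys)
  case Nil then show ?case by (cases m) auto
next
  case (Cons x xs)
  show ?case
  proof (cases m)
    case 0 then show ?thesis using Cons.prems by simp
  next
    case (Suc m')
    have l: "l = Suc (length xs)" using Cons.prems by simp
    have "(\<exists>zs. ys = x # zs \<and> zs \<in> set (combs m' (length xs) xs)) \<or> ys \<in> set (combs (Suc m') (length xs) xs)"
      using Cons.prems(3) Suc l by (auto simp: consall_map split: if_splits)
    then show ?thesis
    proof
      assume "\<exists>zs. ys = x # zs \<and> zs \<in> set (combs m' (length xs) xs)"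
      then obtain zs where zs: "ys = x # zs" "zs \<in> set (combs m' (length xs) xs)" by blast
      from Cons.IH[OF refl _ zs(2)] Cons.prems(2) have "distinct zs \<and> set zs \<subseteq> set xs \<and> length zs = m'"
        by simp
      then show ?thesis using zs Suc Cons.prems(2) by auto
    next
      assume "ys \<in> set (combs (Suc m') (length xs) xs)"
      from Cons.IH[OF refl _ this] Cons.prems(2) Suc show ?thesis by auto
    qed
  qed
qed

lemma combs_complete:
  "length xs = l \<Longrightarrow> distinct xs \<Longrightarrow> A \<subseteq> set xs \<Longrightarrow> card A = m \<Longrightarrow>
   filter (\<lambda>x. x \<in> A) xs \<in> set (combs m l xs)"
proof (induction xs arbitrary: m l A)
  case Nil then show ?case by (cases m) auto
next
  case (Cons x xs)
  have finA: "finite A" using Cons.prems(3) finite_subset by blast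
  show ?case
  proof (cases m)
    case 0
    then have "A = {}" using Cons.prems finA by simp
    then show ?thesis using 0 by simp
  next
    case (Suc m')
    have l: "l = Suc (length xs)" using Cons.prems by simp
    have "card A \<le> card (set (x # xs))" using Cons.prems(3) by (intro card_mono) auto
    also have "\<dots> = l" using Cons.prems(1,2) by (simp add: distinct_card)
    finally have nl: "\<not> l < Suc m'" using Suc Cons.prems(4) by simp
    have xn: "x \<notin> set xs" using Cons.prems(2) by simp
    show ?thesis
    proof (cases "x \<in> A")
      case True
      have f: "filter (\<lambda>y. y \<in> A) xs = filter (\<lambda>y. y \<in> A - {x}) xs"
        using xn by (intro filter_cong) auto
      have "filter (\<lambda>y. y \<in> A - {x}) xs \<in> set (combs m' (length xs) xs)"
        using Cons.IH[of "length xs" "A - {x}" m'] Cons.prems True Suc finA by auto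
      then show ?thesis using True f nl l Suc by (simp add: consall_map)
    next
      case False
      have "filter (\<lambda>y. y \<in> A) xs \<in> set (combs (Suc m') (length xs) xs)"
        using Cons.IH[of "length xs" A "Suc m'"] Cons.prems False Suc by auto
      then show ?thesis using False nl l Suc by (simp add: consall_map)
    qed
  qed
qed

lemma rng_eq: "rng K = rev [0..<K]"
  by (induction K) auto

lemma minsol_prop:
  "Rs \<noteq> [] \<Longrightarrow> \<exists>R\<in>set Rs. minsol p d w pr n Rs = Some (solve1 p d w pr n R) \<and>
     (\<forall>R'\<in>set Rs. snd (solve1 p d w pr n R) \<le> snd (solve1 p d w pr n R'))"
proof (induction Rs)
  case Nil then show ?case by simp
next
  case (Cons R Rs)
  show ?case
  proof (cases "Rs = []")
    case True then show ?thesis by simp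
  next
    case False
    then obtain R0 where R0: "R0 \<in> set Rs" "minsol p d w pr n Rs = Some (solve1 p d w pr n R0)"
      "\<forall>R'\<in>set Rs. snd (solve1 p d w pr n R0) \<le> snd (solve1 p d w pr n R')"
      using Cons.IH by blast
    show ?thesis
    proof (cases "snd (solve1 p d w pr n R) \<le> snd (solve1 p d w pr n R0)")
      case True
      then show ?thesis using R0 by (intro bexI[of _ R]) (auto simp: Let_def)
    next
      case False
      then show ?thesis using R0 by (intro bexI[of _ R0]) (auto simp: Let_def)
    qed
  qed
qed


lemma bestj_None: "bestj w d PS U = None \<longleftrightarrow> (\<forall>(j, c)\<in>set U. c \<noteq> 0)"
  by (induction w d PS U rule: bestj.induct) (auto simp: Let_def split: option.splits)

lemma bestj_Some: "bestj w d PS U = Some (j, g) \<Longrightarrow>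
  (j, 0) \<in> set U \<and> g = gval w d j PS \<and> (\<forall>(i, c)\<in>set U. c = 0 \<longrightarrow> g \<le> gval w d i PS)"
proof (induction U arbitrary: j g)
  case Nil then show ?case by simp
next
  case (Cons a U)
  obtain i c where a: "a = (i, c)" by (cases a)
  show ?case
  proof (cases "c = 0")
    case False
    then show ?thesis using Cons a by (auto simp: Let_def)
  next
    case True
    show ?thesis
    proof (cases "bestj w d PS U")
      case None
      then have "\<forall>(j, c)\<in>set U. c \<noteq> 0" using bestj_None by blast
      then show ?thesis using Cons.prems a True None by (auto simp: Let_def)
    next
      case (Some b)
      obtain j' g' where b: "b = (j', g')" by (cases b)
      have IH: "(j', 0) \<in> set U \<and> g' = gval w d j' PS \<and> (\<forall>(i, c)\<in>set U. c = 0 \<longrightarrow> g' \<le> gval w d i PS)"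
        using Cons.IH[OF Some[unfolded b]] .
      show ?thesis
      proof (cases "gval w d i PS \<le> g'")
        case True2: True
        then show ?thesis using Cons.prems a True Some b IH by (fastforce simp: Let_def)
      next
        case False2: False
        then show ?thesis using Cons.prems a True Some b IH by (fastforce simp: Let_def)
      qed
    qed
  qed
qed

lemma pick_fst: "map fst (pick q j U) = filter (\<lambda>i. i \<noteq> j) (map fst U)"
  by (induction q j U rule: pick.induct) auto

lemma pick_mem: "(i, c) \<in> set (pick q j U) \<Longrightarrow>
  \<exists>c0. (i, c0) \<in> set U \<and> i \<noteq> j \<and> c = (if q i j then c0 - 1 else c0)"
  by (induction q j U rule: pick.induct) (auto split: if_splits)

lemma psums_eq: "psums p R U = map (\<lambda>s. (s, sumP p s U)) R"
  by (induction R) auto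

lemma sumP_eq: "sumP p s U = sum_list (map (p s) (map fst U))"
  by (induction p s U rule: sumP.induct) auto

lemma gval_ge: "s \<in> set R \<Longrightarrow> w s j * max 0 (F s - d s j) \<le> gval w d j (map (\<lambda>s. (s, F s)) R)"
  by (induction R) auto

lemma gval_le: "0 \<le> M \<Longrightarrow> (\<forall>s\<in>set R. w s j * max 0 (F s - d s j) \<le> M) \<Longrightarrow>
  gval w d j (map (\<lambda>s. (s, F s)) R) \<le> M"
  by (induction R) auto

lemma exists_maximal:
  fixes n :: nat
  assumes irr: "\<forall>i<n. \<not> prec i i"
    and tr: "\<forall>i<n. \<forall>j<n. \<forall>l<n. prec i j \<and> prec j l \<longrightarrow> prec i l"
    and S: "S \<subseteq> {0..<n}" "S \<noteq> {}"
  shows "\<exists>x\<in>S. \<forall>y\<in>S. \<not> prec x y"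
proof -
  have fin: "finite S" using finite_subset[OF S(1)] by simp
  let ?g = "\<lambda>x. card {i\<in>S. prec i x}"
  have "Max (?g ` S) \<in> ?g ` S" using fin S(2) by (intro Max_in) auto
  then obtain x where x0: "x \<in> S" "Max (?g ` S) = ?g x" by blast
  then have x: "x \<in> S" "?g x = Max (?g ` S)" by simp_all
  show ?thesis
  proof (intro bexI[OF _ x(1)] ballI notI)
    fix y assume y: "y \<in> S" and xy: "prec x y"
    have sub: "insert x {i\<in>S. prec i x} \<subseteq> {i\<in>S. prec i y}"
    proof
      fix i assume i: "i \<in> insert x {i\<in>S. prec i x}"
      show "i \<in> {i\<in>S. prec i y}"
      proof (cases "i = x")
        case True then show ?thesis using x y xy by simp
      next
        case False
        then have iS: "i \<in> S" "prec i x" using i by auto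
        moreover have "i < n" "x < n" "y < n" using S(1) iS x(1) y by auto
        ultimately show ?thesis using tr xy by blast
      qed
    qed
    have nx: "x \<notin> {i\<in>S. prec i x}" using irr S x by auto
    have "?g x + 1 = card (insert x {i\<in>S. prec i x})" using nx fin by simp
    also have "\<dots> \<le> ?g y" using sub fin by (intro card_mono) auto
    also have "\<dots> \<le> Max (?g ` S)" using fin y by (intro Max_ge) auto
    finally show False using x by simp
  qed
qed

lemma sum_list_set: "distinct xs \<Longrightarrow> sum_list (map f xs) = sum f (set xs)"
  by (simp add: sum_list_distinct_conv_sum_set)

lemma lawler_main:
  assumes irr: "\<forall>i<n. \<not> prec i i"
    and tr: "\<forall>i<n. \<forall>j<n. \<forall>l<n. prec i j \<and> prec j l \<longrightarrow> prec i l"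
    and nn: "\<forall>s\<in>set R. \<forall>j<n. 0 \<le> p s j \<and> 0 \<le> w s j"
  shows "distinct (map fst U) \<Longrightarrow> set (map fst U) \<subseteq> {0..<n} \<Longrightarrow>
    (\<forall>(j, c)\<in>set U. c = card {i\<in>set (map fst U). prec j i}) \<Longrightarrow> length U \<le> f \<Longrightarrow>
    \<exists>ys. lawler p d w prec R f U acc = ys @ acc \<and> distinct ys \<and> set ys = set (map fst U) \<and>
      ((sorted_wrt (\<lambda>a b. \<not> prec b a) acc \<and> (\<forall>x\<in>set (map fst U). \<forall>a\<in>set acc. \<not> prec a x))
         \<longrightarrow> sorted_wrt (\<lambda>a b. \<not> prec b a) (ys @ acc)) \<and>
      (\<forall>\<tau>. distinct \<tau> \<and> set \<tau> = set (map fst U) \<and> sorted_wrt (\<lambda>a b. \<not> prec b a) \<tau> \<longrightarrow>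
         vmax p d w R (ys @ acc) \<le> vmax p d w R (\<tau> @ acc))"
proof (induction f arbitrary: U acc)
  case 0
  then have "U = []" by simp
  then show ?case by (intro exI[of _ "[]"]) simp
next
  case (Suc f)
  let ?S = "set (map fst U)"
  let ?Q = "\<lambda>a b. \<not> prec b a"
  show ?case
  proof (cases "U = []")
    case True
    then show ?thesis by (intro exI[of _ "[]"]) simp
  next
    case Une: False
    have finS: "finite ?S" by simp
    obtain m0 where m0: "m0 \<in> ?S" "\<forall>y\<in>?S. \<not> prec m0 y"
      using exists_maximal[OF irr tr Suc.prems(2)] Une by auto
    obtain c0 where c0: "(m0, c0) \<in> set U" using m0 by auto
    have "c0 = card {i\<in>?S. prec m0 i}" using Suc.prems(3) c0 by fastforce
    moreover have "{i\<in>?S. prec m0 i} = {}" using m0 by auto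
    ultimately have "c0 = 0" by simp
    then have "bestj w d (psums p R U) U \<noteq> None" using c0 bestj_None by fastforce
    then obtain j g where bj: "bestj w d (psums p R U) U = Some (j, g)" by auto
    note B = bestj_Some[OF bj]
    have jS: "j \<in> ?S" using B by force
    have "card {i\<in>?S. prec j i} = 0" using Suc.prems(3) B by fastforce
    then have jmax: "\<forall>i\<in>?S. \<not> prec j i" using finS by auto
    let ?U' = "pick prec j U"
    have fstU': "map fst ?U' = filter (\<lambda>i. i \<noteq> j) (map fst U)" by (rule pick_fst)
    have S': "set (map fst ?U') = ?S - {j}" unfolding fstU' by auto
    have d': "distinct (map fst ?U')" unfolding fstU' using Suc.prems(1) by simp
    have sub': "set (map fst ?U') \<subseteq> {0..<n}" using S' Suc.prems(2) by auto
    have cnt': "\<forall>(i, c)\<in>set ?U'. c = card {x\<in>set (map fst ?U'). prec i x}"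
    proof (intro ballI, clarify)
      fix i c assume ic: "(i, c) \<in> set ?U'"
      obtain c0 where c0: "(i, c0) \<in> set U" "i \<noteq> j" "c = (if prec i j then c0 - 1 else c0)"
        using pick_mem[OF ic] by blast
      have c0e: "c0 = card {x\<in>?S. prec i x}" using Suc.prems(3) c0(1) by auto
      have e: "{x\<in>set (map fst ?U'). prec i x} = {x\<in>?S. prec i x} - {j}" using S' by auto
      show "c = card {x\<in>set (map fst ?U'). prec i x}"
        unfolding e using c0 c0e jS finS by (auto simp: card_Diff_singleton)
    qed
    have "length ?U' = length (map fst ?U')" by simp
    also have "\<dots> < length (map fst U)" unfolding fstU'
      using jS by (intro length_filter_less) auto
    finally have len': "length ?U' \<le> f" using Suc.prems(4) by simp
    obtain ys' where ys': "lawler p d w prec R f ?U' (j # acc) = ys' @ j # acc"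
      "distinct ys'" "set ys' = set (map fst ?U')"
      "(sorted_wrt ?Q (j # acc) \<and> (\<forall>x\<in>set (map fst ?U'). \<forall>a\<in>set (j # acc). \<not> prec a x))
         \<longrightarrow> sorted_wrt ?Q (ys' @ j # acc)"
      "\<forall>\<tau>. distinct \<tau> \<and> set \<tau> = set (map fst ?U') \<and> sorted_wrt ?Q \<tau> \<longrightarrow>
         vmax p d w R (ys' @ j # acc) \<le> vmax p d w R (\<tau> @ j # acc)"
      using Suc.IH[OF d' sub' cnt' len', of "j # acc"] by blast
    have L: "lawler p d w prec R (Suc f) U acc = (ys' @ [j]) @ acc"
      using Une bj ys'(1) by simp
    show ?thesis
    proof (intro exI[of _ "ys' @ [j]"] conjI allI impI)
      show "lawler p d w prec R (Suc f) U acc = (ys' @ [j]) @ acc" by (rule L)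
      show "distinct (ys' @ [j])" using ys'(2,3) S' by auto
      show "set (ys' @ [j]) = ?S" using ys'(3) S' jS by auto
    next
      assume a: "sorted_wrt ?Q acc \<and> (\<forall>x\<in>?S. \<forall>a\<in>set acc. \<not> prec a x)"
      have "sorted_wrt ?Q (j # acc)" using a jS by auto
      moreover have "\<forall>x\<in>set (map fst ?U'). \<forall>a\<in>set (j # acc). \<not> prec a x"
        using a jmax S' by auto
      ultimately show "sorted_wrt ?Q ((ys' @ [j]) @ acc)" using ys'(4) by simp
    next
      fix \<tau> assume \<tau>: "distinct \<tau> \<and> set \<tau> = ?S \<and> sorted_wrt ?Q \<tau>"
      let ?\<tau>' = "remove1 j \<tau>"
      have t'd: "distinct ?\<tau>'" using \<tau> by simp
      have t'S: "set ?\<tau>' = set (map fst ?U')" using \<tau> S' by (simp add: set_remove1_eq)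
      have t'Q: "sorted_wrt ?Q ?\<tau>'"
        using \<tau> by (simp add: distinct_remove1_removeAll removeAll_filter_not_eq sorted_wrt_filter)
      have IH: "vmax p d w R (ys' @ j # acc) \<le> vmax p d w R (?\<tau>' @ j # acc)"
        using ys'(5) t'd t'S t'Q by blast
      let ?M = "vmax p d w R (\<tau> @ acc)"
      have M0: "0 \<le> ?M" by (rule vmax_nonneg)
      have tne: "\<tau> \<noteq> []" using \<tau> jS by auto
      define l where "l = last \<tau>"
      define \<tau>0 where "\<tau>0 = butlast \<tau>"
      have tl: "\<tau> = \<tau>0 @ [l]" using tne unfolding l_def \<tau>0_def by simp
      have lS: "l \<in> ?S" using \<tau> tl by auto
      have lmax: "\<forall>x\<in>?S. \<not> prec l x"
      proof
        fix x assume x: "x \<in> ?S"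
        show "\<not> prec l x"
        proof (cases "x = l")
          case True then show ?thesis using irr lS Suc.prems(2) by auto
        next
          case False
          then have "x \<in> set \<tau>0" using x \<tau> tl by auto
          then show ?thesis using \<tau> tl by (auto simp: sorted_wrt_append)
        qed
      qed
      obtain cl where cl: "(l, cl) \<in> set U" using lS by auto
      have "cl = card {i\<in>?S. prec l i}" using Suc.prems(3) cl by fastforce
      moreover have "{i\<in>?S. prec l i} = {}" using lmax by auto
      ultimately have "cl = 0" by simp
      then have gl: "g \<le> gval w d l (psums p R U)" using B cl by fastforce
      have sumU: "\<And>s. sumP p s U = sum (p s) ?S"
        using Suc.prems(1) by (simp only: sumP_eq sum_list_set)
      have sumS: "\<And>s. sum_list (map (p s) \<tau>) = sumP p s U"
        using \<tau> by (simp add: sumU sum_list_set)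
      have sumS': "\<And>s. sum_list (map (p s) ?\<tau>') + p s j = sumP p s U"
      proof -
        fix s
        have "sum_list (map (p s) ?\<tau>') + p s j = sum (p s) (?S - {j}) + p s j"
          using t'd t'S S' by (simp add: sum_list_set)
        also have "\<dots> = sum (p s) ?S" using jS finS by (simp add: sum.remove)
        also have "\<dots> = sumP p s U" by (simp add: sumU)
        finally show "sum_list (map (p s) ?\<tau>') + p s j = sumP p s U" .
      qed
      have gM: "gval w d l (psums p R U) \<le> ?M"
        unfolding psums_eq
      proof (rule gval_le[OF M0], intro ballI)
        fix s assume s: "s \<in> set R"
        have "fval p d w s (\<tau> @ acc) 0 = fval p d w s (\<tau>0 @ ([l] @ acc)) 0" using tl by simp
        also have "\<dots> \<ge> fval p d w s ([l] @ acc) (sum_list (map (p s) \<tau>0))"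
          by (simp only: fval_append) simp
        finally have "fval p d w s ([l] @ acc) (sum_list (map (p s) \<tau>0)) \<le> fval p d w s (\<tau> @ acc) 0" .
        moreover have "w s l * max 0 (sumP p s U - d s l) \<le> fval p d w s ([l] @ acc) (sum_list (map (p s) \<tau>0))"
          using sumS[of s] tl by (simp add: Let_def)
        ultimately show "w s l * max 0 (sumP p s U - d s l) \<le> ?M"
          using vmax_ge[OF s, of p d w "\<tau> @ acc"] by linarith
      qed
      have "vmax p d w R (?\<tau>' @ j # acc) \<le> ?M"
      proof (rule vmax_le[OF M0], intro ballI)
        fix s assume s: "s \<in> set R"
        have vs: "fval p d w s (\<tau> @ acc) 0 \<le> ?M" by (rule vmax_ge[OF s])
        have e: "fval p d w s (?\<tau>' @ j # acc) 0 =
          max (fval p d w s ?\<tau>' 0) (max (w s j * max 0 (sumP p s U - d s j)) (fval p d w s acc (sumP p s U)))"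
          using sumS'[of s] by (simp add: fval_append Let_def)
        have e2: "fval p d w s (\<tau> @ acc) 0 = max (fval p d w s \<tau> 0) (fval p d w s acc (sumP p s U))"
          using sumS[of s] by (simp add: fval_append)
        have a1: "fval p d w s ?\<tau>' 0 \<le> fval p d w s \<tau> 0"
          using nn s \<tau> Suc.prems(2) by (intro fval_remove1) auto
        have a2: "w s j * max 0 (sumP p s U - d s j) \<le> ?M"
        proof -
          have "w s j * max 0 (sumP p s U - d s j) \<le> gval w d j (psums p R U)"
            unfolding psums_eq by (rule gval_ge[OF s])
          also have "\<dots> = g" using B by simp
          finally show ?thesis using gl gM by linarith
        qed
        show "fval p d w s (?\<tau>' @ j # acc) 0 \<le> ?M"
          unfolding e using a1 a2 vs e2 by auto
      qed
      then show "vmax p d w R ((ys' @ [j]) @ acc) \<le> ?M" using IH by simp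
    qed
  qed
qed


lemma cnt_eq: "cnt pr j m = card {i. i < m \<and> pr j i}"
proof (induction m)
  case 0 then show ?case by simp
next
  case (Suc m)
  have "{i. i < Suc m \<and> pr j i} = (if pr j m then insert m {i. i < m \<and> pr j i} else {i. i < m \<and> pr j i})"
    by (auto simp: less_Suc_eq)
  then show ?case using Suc by simp
qed

lemma mkU_fst: "map fst (mkU pr n m) = rev [0..<m]"
  by (induction m) auto

lemma mkU_mem: "(j, c) \<in> set (mkU pr n m) \<Longrightarrow> c = cnt pr j n"
  by (induction m) auto

lemma solve1_opt:
  assumes irr: "\<forall>i<n. \<not> prec i i"
    and tr: "\<forall>i<n. \<forall>j<n. \<forall>l<n. prec i j \<and> prec j l \<longrightarrow> prec i l"
    and nn: "\<forall>s\<in>set R. \<forall>j<n. 0 \<le> p s j \<and> 0 \<le> w s j"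
  shows "fst (solve1 p d w prec n R) \<in> schedules n prec \<and>
    snd (solve1 p d w prec n R) = vmax p d w R (fst (solve1 p d w prec n R)) \<and>
    (\<forall>\<tau>\<in>schedules n prec. vmax p d w R (fst (solve1 p d w prec n R)) \<le> vmax p d w R \<tau>)"
proof -
  let ?U = "mkU prec n n"
  have S: "set (map fst ?U) = {0..<n}" by (simp add: mkU_fst)
  have d: "distinct (map fst ?U)" by (simp add: mkU_fst)
  have c: "\<forall>(j, c)\<in>set ?U. c = card {i\<in>set (map fst ?U). prec j i}"
  proof (intro ballI, clarify)
    fix j c assume "(j, c) \<in> set ?U"
    then have "c = cnt prec j n" by (rule mkU_mem)
    then show "c = card {i\<in>set (map fst ?U). prec j i}" unfolding S by (simp add: cnt_eq)
  qed
  have len: "length ?U \<le> n" by (simp add: length_mkU)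
  obtain ys where ys: "lawler p d w prec R n ?U [] = ys @ []" "distinct ys" "set ys = {0..<n}"
    "sorted_wrt (\<lambda>a b. \<not> prec b a) (ys @ [])"
    "\<forall>\<tau>. distinct \<tau> \<and> set \<tau> = {0..<n} \<and> sorted_wrt (\<lambda>a b. \<not> prec b a) \<tau> \<longrightarrow>
         vmax p d w R (ys @ []) \<le> vmax p d w R (\<tau> @ [])"
    using lawler_main[OF irr tr nn d _ c len, of d "[]"] S by auto
  have fs: "fst (solve1 p d w prec n R) = ys" using ys(1) by (simp add: solve1_def Let_def)
  have sch: "\<And>\<tau>. \<tau> \<in> schedules n prec \<longleftrightarrow> distinct \<tau> \<and> set \<tau> = {0..<n} \<and> sorted_wrt (\<lambda>a b. \<not> prec b a) \<tau>"
    by (simp add: schedules_def sorted_wrt_iff_nth_less) blast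
  show ?thesis using ys fs sch by (auto simp: solve1_def Let_def)
qed


lemma kth_facts:
  fixes f :: "nat \<Rightarrow> real"
  assumes k: "1 \<le> k" "k \<le> K"
  defines "v \<equiv> kth_largest k (map f [0..<K])"
  shows "card {i. i < K \<and> f i < v} \<le> K - k" and "K - k + 1 \<le> card {i. i < K \<and> f i \<le> v}"
proof -
  let ?xs = "map f [0..<K]"
  let ?ys = "sort ?xs"
  have ly: "length ?ys = K" by simp
  have srt: "sorted ?ys" by simp
  have v: "v = ?ys ! (K - k)"
    unfolding v_def kth_largest_def using k by (simp add: rev_nth)
  have cnt: "\<And>P. card {i. i < K \<and> P (f i)} = card {i. i < K \<and> P (?ys ! i)}"
  proof -
    fix P :: "real \<Rightarrow> bool"
    have "length (filter P ?ys) = length (filter P ?xs)" by (simp add: filter_sort)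
    moreover have "length (filter P ?xs) = card {i. i < K \<and> P (f i)}"
      by (simp add: length_filter_conv_card) (metis (lifting) add_0 diff_zero nth_upt nth_map length_upt)
    moreover have "length (filter P ?ys) = card {i. i < K \<and> P (?ys ! i)}"
      by (simp only: length_filter_conv_card ly)
    ultimately show "card {i. i < K \<and> P (f i)} = card {i. i < K \<and> P (?ys ! i)}" by simp
  qed
  have "{i. i < K \<and> ?ys ! i < v} \<subseteq> {0..<K - k}"
  proof
    fix i assume i: "i \<in> {i. i < K \<and> ?ys ! i < v}"
    show "i \<in> {0..<K - k}"
    proof (rule ccontr)
      assume "i \<notin> {0..<K - k}"
      then have "K - k \<le> i" by simp
      then have "?ys ! (K - k) \<le> ?ys ! i" using i srt ly by (intro sorted_nth_mono) auto
      then show False using i v by simp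
    qed
  qed
  then have "card {i. i < K \<and> ?ys ! i < v} \<le> K - k"
    using card_mono[of "{0..<K - k}"] by fastforce
  then show "card {i. i < K \<and> f i < v} \<le> K - k" using cnt[of "\<lambda>x. x < v"] by simp
  have "{0..<K - k + 1} \<subseteq> {i. i < K \<and> ?ys ! i \<le> v}"
  proof
    fix i assume i: "i \<in> {0..<K - k + 1}"
    then have "?ys ! i \<le> ?ys ! (K - k)" using srt ly k by (intro sorted_nth_mono) auto
    then show "i \<in> {i. i < K \<and> ?ys ! i \<le> v}" using i v k by auto
  qed
  then have "K - k + 1 \<le> card {i. i < K \<and> ?ys ! i \<le> v}"
    using card_mono[of "{i. i < K \<and> ?ys ! i \<le> v}" "{0..<K - k + 1}"] by simp
  then show "K - k + 1 \<le> card {i. i < K \<and> f i \<le> v}" using cnt[of "\<lambda>x. x \<le> v"] by simp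
qed

lemma kth_Q1:
  fixes f :: "nat \<Rightarrow> real"
  assumes k: "1 \<le> k" "k \<le> K" and R: "set R \<subseteq> {0..<K}" "card (set R) = K - k + 1"
  shows "\<exists>s\<in>set R. kth_largest k (map f [0..<K]) \<le> f s"
proof (rule ccontr)
  let ?v = "kth_largest k (map f [0..<K])"
  assume "\<not> ?thesis"
  then have "set R \<subseteq> {i. i < K \<and> f i < ?v}" using R by auto
  then have "card (set R) \<le> card {i. i < K \<and> f i < ?v}" by (intro card_mono) auto
  then show False using kth_facts(1)[OF k, of f] R by simp
qed

lemma kth_Q2:
  fixes f :: "nat \<Rightarrow> real"
  assumes k: "1 \<le> k" "k \<le> K"
  shows "\<exists>A. A \<subseteq> {0..<K} \<and> card A = K - k + 1 \<and> (\<forall>s\<in>A. f s \<le> kth_largest k (map f [0..<K]))"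
proof -
  let ?v = "kth_largest k (map f [0..<K])"
  obtain A where "A \<subseteq> {i. i < K \<and> f i \<le> ?v}" "card A = K - k + 1"
    using obtain_subset_with_card_n[OF kth_facts(2)[OF k, of f]] by blast
  then show ?thesis by (intro exI[of _ A]) auto
qed


lemma T_rng_eq: "T_rng K = K + 1"
  by (induction K) auto

lemma rng_props: "distinct (rng K)" "set (rng K) = {0..<K}" "length (rng K) = K"
  by (simp_all add: rng_eq)

theorem theorem5:
  "\<exists>c::nat. \<forall>n K k (p :: nat \<Rightarrow> nat \<Rightarrow> real) d w prec.
     valid_instance n K p d w prec \<and> 1 \<le> k \<and> k \<le> K \<longrightarrow>
       minquant_optimal n K k p d w prec (minquant p d w prec n K k) \<and>
       T_minquant (p, \<lambda>_ _. 1) (d, \<lambda>_ _. 1) (w, \<lambda>_ _. 1) (prec, \<lambda>_ _. 1) n K k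
         \<le> c * ((K choose (k - 1)) * (K - k + 1) * n ^ 2) \<and>
       T_minquant (p, \<lambda>_ _. 1) (d, \<lambda>_ _. 1) (w, \<lambda>_ _. 1) (prec, \<lambda>_ _. 1) n K k
         \<le> c * (K ^ k * n ^ 2)"
proof (intro exI[of _ 76] allI impI)
  fix n K k and p :: "nat \<Rightarrow> nat \<Rightarrow> real" and d w prec
  assume a: "valid_instance n K p d w prec \<and> 1 \<le> k \<and> k \<le> K"
  then have V: "valid_instance n K p d w prec" and k: "1 \<le> k" "k \<le> K" by simp_all
  have n1: "1 \<le> n" using V unfolding valid_instance_def by blast
  have K1: "1 < K" using V unfolding valid_instance_def by blast
  have nn0: "\<forall>s<K. \<forall>j<n. 0 \<le> p s j \<and> 0 \<le> d s j \<and> 0 \<le> w s j"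
    using V unfolding valid_instance_def by blast
  have irr: "\<forall>i<n. \<not> prec i i" using V unfolding valid_instance_def by blast
  have tr: "\<forall>i<n. \<forall>j<n. \<forall>l<n. prec i j \<and> prec j l \<longrightarrow> prec i l"
    using V unfolding valid_instance_def by blast
  define m where "m = K - k + 1"
  define Rs where "Rs = combs m K (rng K)"
  have m1: "1 \<le> m" and mK: "m \<le> K" using k by (auto simp: m_def)
  have Rs_props: "\<And>R. R \<in> set Rs \<Longrightarrow> distinct R \<and> set R \<subseteq> {0..<K} \<and> length R = m"
    using combs_props[of "rng K" K _ m] rng_props unfolding Rs_def by metis
  have Rs_compl: "\<And>A. A \<subseteq> {0..<K} \<Longrightarrow> card A = m \<Longrightarrow> filter (\<lambda>x. x \<in> A) (rng K) \<in> set Rs"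
    using combs_complete[of "rng K" K] rng_props unfolding Rs_def by metis
  have "filter (\<lambda>x. x \<in> {0..<m}) (rng K) \<in> set Rs" using mK by (intro Rs_compl) auto
  then have Rsne: "Rs \<noteq> []" by auto
  have nnR: "\<And>R. R \<in> set Rs \<Longrightarrow> \<forall>s\<in>set R. \<forall>j<n. 0 \<le> p s j \<and> 0 \<le> w s j"
    using Rs_props nn0 by fastforce
  obtain R0 where R0: "R0 \<in> set Rs" "minsol p d w prec n Rs = Some (solve1 p d w prec n R0)"
    "\<forall>R'\<in>set Rs. snd (solve1 p d w prec n R0) \<le> snd (solve1 p d w prec n R')"
    using minsol_prop[OF Rsne] by blast
  define \<sigma> where "\<sigma> = fst (solve1 p d w prec n R0)"
  have mq: "minquant p d w prec n K k = \<sigma>"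
    unfolding minquant_def Rs_def[symmetric] m_def[symmetric] using R0(2) \<sigma>_def
    by (cases "solve1 p d w prec n R0") simp
  note S0 = solve1_opt[OF irr tr nnR[OF R0(1)], of d]
  have \<sigma>sch: "\<sigma> \<in> schedules n prec" using S0 \<sigma>_def by simp
  have wnn: "\<And>s. s < K \<Longrightarrow> \<forall>j<n. 0 \<le> w s j" using nn0 by auto
  have opt: "\<forall>\<pi>'\<in>schedules n prec. quant_obj n K k p d w \<sigma> \<le> quant_obj n K k p d w \<pi>'"
  proof
    fix \<pi>' assume \<pi>': "\<pi>' \<in> schedules n prec"
    let ?f = "sched_cost n p d w \<sigma>"
    let ?f' = "sched_cost n p d w \<pi>'"
    have q1: "quant_obj n K k p d w \<sigma> = kth_largest k (map ?f [0..<K])"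
      by (simp add: quant_obj_def)
    have q2: "quant_obj n K k p d w \<pi>' = kth_largest k (map ?f' [0..<K])"
      by (simp add: quant_obj_def)
    have R0p: "distinct R0" "set R0 \<subseteq> {0..<K}" "length R0 = m" using Rs_props[OF R0(1)] by auto
    obtain s where s: "s \<in> set R0" "kth_largest k (map ?f [0..<K]) \<le> ?f s"
      using kth_Q1[OF k, of R0 ?f] R0p by (auto simp: distinct_card m_def)
    have sK: "s < K" using s R0p by auto
    have "?f s = fval p d w s \<sigma> 0" using sched_cost_eq[where w=w and s=s and p=p and d=d, OF \<sigma>sch n1 wnn[OF sK]] by simp
    also have "\<dots> \<le> vmax p d w R0 \<sigma>" by (rule vmax_ge[OF s(1)])
    also have "\<dots> = snd (solve1 p d w prec n R0)" using S0 \<sigma>_def by simp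
    finally have A: "quant_obj n K k p d w \<sigma> \<le> snd (solve1 p d w prec n R0)" using q1 s by simp
    obtain A where Ap: "A \<subseteq> {0..<K}" "card A = m" "\<forall>s\<in>A. ?f' s \<le> kth_largest k (map ?f' [0..<K])"
      using kth_Q2[OF k, of ?f'] unfolding m_def by blast
    define R where "R = filter (\<lambda>x. x \<in> A) (rng K)"
    have RRs: "R \<in> set Rs" unfolding R_def using Ap by (intro Rs_compl) auto
    have setR: "set R = A" using Ap rng_props unfolding R_def by auto
    note S1 = solve1_opt[OF irr tr nnR[OF RRs], of d]
    have "A \<noteq> {}" using Ap m1 by auto
    then obtain s0 where s0: "s0 \<in> A" by auto
    have s0K: "s0 < K" using s0 Ap by auto
    have "0 \<le> ?f' s0" using sched_cost_eq[where w=w and s=s0 and p=p and d=d, OF \<pi>' n1 wnn[OF s0K]] fval_nonneg[of p d w s0 \<pi>' 0] by simp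
    then have v0: "0 \<le> kth_largest k (map ?f' [0..<K])" using Ap s0 by fastforce
    have "snd (solve1 p d w prec n R0) \<le> snd (solve1 p d w prec n R)" using R0(3) RRs by blast
    also have "\<dots> \<le> vmax p d w R \<pi>'" using S1 \<pi>' by auto
    also have "\<dots> \<le> kth_largest k (map ?f' [0..<K])"
    proof (rule vmax_le[OF v0], intro ballI)
      fix s assume s: "s \<in> set R"
      then have "s < K" using setR Ap by auto
      then have "fval p d w s \<pi>' 0 = ?f' s" using sched_cost_eq[where w=w and s=s and p=p and d=d, OF \<pi>' n1 wnn] by simp
      then show "fval p d w s \<pi>' 0 \<le> kth_largest k (map ?f' [0..<K])" using Ap s setR by simp
    qed
    finally show "quant_obj n K k p d w \<sigma> \<le> quant_obj n K k p d w \<pi>'" using A q2 by simp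
  qed
  have part1: "minquant_optimal n K k p d w prec (minquant p d w prec n K k)"
    unfolding minquant_optimal_def mq using \<sigma>sch opt by simp
  define C where "C = K choose m"
  have CK: "C = K choose (k - 1)"
    unfolding C_def m_def using k binomial_symmetric[of "k - 1" K] by (simp add: Suc_diff_le)
  define B where "B = (K choose (k - 1)) * (K - k + 1)"
  have BC: "B = C * m" unfolding B_def CK m_def by simp
  have Babs: "B = K * (K - 1 choose (k - 1))"
    unfolding B_def using binomial_absorb_comp[of K "k - 1"] k by (simp add: mult.commute Suc_diff_le)
  have c1: "1 \<le> K - 1 choose (k - 1)" using k by (simp add: Suc_leI)
  have KB: "K \<le> B" unfolding Babs using c1 by simp
  have BKk: "B \<le> K ^ k"
  proof -
    have "K - 1 choose (k - 1) \<le> (K - 1) ^ (k - 1)" using k by (intro binomial_le_pow) simp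
    also have "\<dots> \<le> K ^ (k - 1)" by (intro power_mono) auto
    finally have "B \<le> K * K ^ (k - 1)" unfolding Babs by simp
    also have "\<dots> = K ^ k" using k by (simp add: power_eq_if)
    finally show ?thesis .
  qed
  have lenRs: "length Rs = C" unfolding Rs_def C_def using rng_props by (simp add: length_combs)
  have Tc: "T_combs m K (rng K) \<le> 6 * (m + 1) * C"
    using T_combs_bound[of "rng K" K m] rng_props mK unfolding C_def by simp
  have Tm: "T_minsol (p, \<lambda>_ _. 1) (d, \<lambda>_ _. 1) (w, \<lambda>_ _. 1) (prec, \<lambda>_ _. 1) n Rs \<le> C * (61 * (m * n^2)) + 1"
    using T_minsol_le[of "\<lambda>_ _. 1" "\<lambda>_ _. 1" "\<lambda>_ _. 1" "\<lambda>_ _. 1" n m Rs p d w prec] n1 m1 Rs_props lenRs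
    by simp
  have TT: "T_minquant (p, \<lambda>_ _. 1) (d, \<lambda>_ _. 1) (w, \<lambda>_ _. 1) (prec, \<lambda>_ _. 1) n K k =
     (K + 1) + T_combs m K (rng K) + T_minsol (p, \<lambda>_ _. 1) (d, \<lambda>_ _. 1) (w, \<lambda>_ _. 1) (prec, \<lambda>_ _. 1) n Rs"
    unfolding T_minquant_def Rs_def m_def by (simp add: T_rng_eq)
  define X where "X = B * n^2"
  have BX: "B \<le> X" unfolding X_def using n1 by simp
  have X1: "1 \<le> X" using BX KB K1 by simp
  have c6: "6 * (m + 1) * C \<le> 12 * X"
  proof -
    have "6 * (m + 1) * C \<le> 6 * (2 * m) * C" using m1 by (intro mult_le_mono) auto
    also have "\<dots> = 12 * B" unfolding BC by simp
    finally show ?thesis using BX by linarith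
  qed
  have c61: "C * (61 * (m * n^2)) = 61 * X" unfolding X_def BC by (simp add: algebra_simps)
  have bound: "T_minquant (p, \<lambda>_ _. 1) (d, \<lambda>_ _. 1) (w, \<lambda>_ _. 1) (prec, \<lambda>_ _. 1) n K k \<le> 76 * X"
    unfolding TT using Tc Tm c6 c61 KB BX X1 by linarith
  have XK: "X \<le> K ^ k * n^2" unfolding X_def using BKk by simp
  let ?T = "T_minquant (p, \<lambda>_ _. 1) (d, \<lambda>_ _. 1) (w, \<lambda>_ _. 1) (prec, \<lambda>_ _. 1) n K k"
  have b1: "?T \<le> 76 * ((K choose (k - 1)) * (K - k + 1) * n ^ 2)"
    using bound unfolding X_def B_def .
  have b2: "?T \<le> 76 * (K ^ k * n ^ 2)" using bound XK by linarith
  show "minquant_optimal n K k p d w prec (minquant p d w prec n K k) \<and>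
       T_minquant (p, \<lambda>_ _. 1) (d, \<lambda>_ _. 1) (w, \<lambda>_ _. 1) (prec, \<lambda>_ _. 1) n K k
         \<le> 76 * ((K choose (k - 1)) * (K - k + 1) * n ^ 2) \<and>
       T_minquant (p, \<lambda>_ _. 1) (d, \<lambda>_ _. 1) (w, \<lambda>_ _. 1) (prec, \<lambda>_ _. 1) n K k
         \<le> 76 * (K ^ k * n ^ 2)"
    using part1 b1 b2 by blast
qed

end
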